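(* Let $n\ge1$, $\varepsilon\in D$, $s\in D^n$, with the recursive construction below, and suppose $\Delta_n\neq0$. Then (i) $\big(\mu^{(n)}\big)^{*}=\Delta'_n\,\big(\mu^{(n-1)}\big)^{*}-\Delta_n\,x^{p(n-1)}\big(\mu^{((n-1)')}\big)^{*}$; (ii) $p(n)=p(n-1)+1$ if $e_{n-1}\le0$, and $p(n)=1$ if $e_{n-1}>0$.
   Context: Let $D$ be a commutative integral domain with $1\neq 0$. The reciprocal of $0$ is $0$, and for nonzero $f\in D[x]$ its reciprocal is $f^{*}(x)=x^{\deg f}f(x^{-1})$. For $s=(s_1,\dots,s_n)\in D^n$ put $\underline{s}=s_1x^{-1}+\cdots+s_nx^{-n}\in D[x,x^{-1}]$; for a Laurent polynomial $F$, $F_k$ is the coefficient of $x^k$; $s^{(i)}=(s_1,\dots,s_i)$. For nonzero $f\in D[x]$ and $t\in D^m$, $\Delta(f,t)=(f\cdot\underline{t})_{\deg f-m}$. Recursive construction (relative to a fixed $\varepsilon\in D$): put $\mu^{(-1)}=\varepsilon$, $\mu^{(0)}=1$, $\Delta_0=1$, $0'=-1$, and for $j\ge 0$ let $e_j=j+1-2\deg\mu^{(j)}$ (so $e_0=1$). For $j=1,\dots,n$ successively define: $\Delta_j=\Delta(\mu^{(j-1)},s^{(j)})$; the index $j'=(j-1)'$ if $\Delta_j=0$ or $e_{j-1}\le 0$, and $j'=j-1$ if $\Delta_j\neq0$ and $e_{j-1}>0$; $\Delta'_j=\Delta_{(j-1)'+1}$; and $\mu^{(j)}=\mu^{(j-1)}$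 if $\Delta_j=0$, otherwise $\mu^{(j)}=\Delta'_j\,x^{\max\{e_{j-1},0\}}\mu^{(j-1)}-\Delta_j\,x^{\max\{-e_{j-1},0\}}\mu^{((j-1)')}$. Define $p(0)=1$ and $p(j)=j-j'$ for $1\le j\le n$. *)

theory Defs
  imports "HOL-Computational_Algebra.Polynomial"
begin

text \<open>Delta(f,t) for t = (t 1, ..., t m): the coefficient of x^(deg f - m) in
  f * (t 1 x^-1 + ... + t m x^-m), written out as a finite sum.\<close>
definition DeltaF :: "'a::idom poly \<Rightarrow> nat \<Rightarrow> (nat \<Rightarrow> 'a) \<Rightarrow> 'a" where
  "DeltaF f m t = (\<Sum>k=1..m.
     (if int (degree f) - int m + int k \<ge> 0
      then coeff f (nat (int (degree f) - int m + int k)) else 0) * t k)"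

text \<open>History of the recursive construction: entry i of hist eps s j (i \<le> j) is
  (mu^(i), i', Delta_i).  mu^(-1) = eps, 0' = -1, Delta_0 = 1.\<close>
fun hist :: "'a::idom \<Rightarrow> (nat \<Rightarrow> 'a) \<Rightarrow> nat \<Rightarrow> ('a poly \<times> int \<times> 'a) list" where
  "hist eps s 0 = [(1, -1, 1)]"
| "hist eps s (Suc k) =
     (let H = hist eps s k;
          m = fst (H ! k);
          kp = fst (snd (H ! k));
          mp = (if kp < 0 then [:eps:] else fst (H ! nat kp));
          d = DeltaF m (Suc k) s;
          dp = snd (snd (H ! nat (kp + 1)));
          e = int k + 1 - 2 * int (degree m);
          jp = (if d = 0 \<or> e \<le> 0 then kp else int k);
          m' = (if d = 0 then m
                else smult dp (monom 1 (nat (max e 0)) * m)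
                   - smult d (monom 1 (nat (max (- e) 0)) * mp))
      in H @ [(m', jp, d)])"

definition mu :: "'a::idom \<Rightarrow> (nat \<Rightarrow> 'a) \<Rightarrow> nat \<Rightarrow> 'a poly" where
  "mu eps s j = fst (hist eps s j ! j)"

definition muI :: "'a::idom \<Rightarrow> (nat \<Rightarrow> 'a) \<Rightarrow> int \<Rightarrow> 'a poly" where
  "muI eps s i = (if i < 0 then [:eps:] else mu eps s (nat i))"

definition jprime :: "'a::idom \<Rightarrow> (nat \<Rightarrow> 'a) \<Rightarrow> nat \<Rightarrow> int" where
  "jprime eps s j = fst (snd (hist eps s j ! j))"

definition Delta :: "'a::idom \<Rightarrow> (nat \<Rightarrow> 'a) \<Rightarrow> nat \<Rightarrow> 'a" where
  "Delta eps s j = snd (snd (hist eps s j ! j))"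

definition Deltap :: "'a::idom \<Rightarrow> (nat \<Rightarrow> 'a) \<Rightarrow> nat \<Rightarrow> 'a" where
  "Deltap eps s j = Delta eps s (nat (jprime eps s (j - 1) + 1))"

definition e_idx :: "'a::idom \<Rightarrow> (nat \<Rightarrow> 'a) \<Rightarrow> nat \<Rightarrow> int" where
  "e_idx eps s j = int j + 1 - 2 * int (degree (mu eps s j))"

definition p_idx :: "'a::idom \<Rightarrow> (nat \<Rightarrow> 'a) \<Rightarrow> nat \<Rightarrow> nat" where
  "p_idx eps s j = (if j = 0 then 1 else nat (int j - jprime eps s j))"

end

theory Submission
  imports Defs
begin

lemma hist_len: "length (hist eps s k) = Suc k"
  by (induction k) (simp_all add: Let_def)

lemma hist_stable: "i \<le> k \<Longrightarrow> hist eps s k ! i = hist eps s i ! i"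
proof (induction k)
  case 0 then show ?case by simp
next
  case (Suc k)
  show ?case
  proof (cases "i = Suc k")
    case False
    then have "i \<le> k" using Suc by simp
    then have "hist eps s (Suc k) ! i = hist eps s k ! i"
      by (simp add: Let_def nth_append hist_len)
    then show ?thesis using Suc \<open>i \<le> k\<close> by simp
  qed simp
qed

lemma hist_last: "hist eps s (Suc k) ! Suc k =
   (let H = hist eps s k;
          m = fst (H ! k);
          kp = fst (snd (H ! k));
          mp = (if kp < 0 then [:eps:] else fst (H ! nat kp));
          d = DeltaF m (Suc k) s;
          dp = snd (snd (H ! nat (kp + 1)));
          e = int k + 1 - 2 * int (degree m);
          jp = (if d = 0 \<or> e \<le> 0 then kp else int k);
          m' = (if d = 0 then m
                else smult dp (monom 1 (nat (max e 0)) * m)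
                   - smult d (monom 1 (nat (max (- e) 0)) * mp))
      in (m', jp, d))"
  by (simp add: Let_def nth_append hist_len)

lemma jp_bounds: "-1 \<le> jprime eps s k \<and> jprime eps s k < int k"
proof (induction k)
  case 0 then show ?case by (simp add: jprime_def)
next
  case (Suc k)
  then show ?case unfolding jprime_def hist_last Let_def by auto
qed

lemma step:
  shows "Delta eps s (Suc k) = DeltaF (mu eps s k) (Suc k) s"
  and "jprime eps s (Suc k) = (if Delta eps s (Suc k) = 0 \<or> e_idx eps s k \<le> 0
          then jprime eps s k else int k)"
  and "mu eps s (Suc k) = (if Delta eps s (Suc k) = 0 then mu eps s k else
         smult (Delta eps s (nat (jprime eps s k + 1))) (monom 1 (nat (max (e_idx eps s k) 0)) * mu eps s k)
       - smult (Delta eps s (Suc k)) (monom 1 (nat (max (- e_idx eps s k) 0)) * muI eps s (jprime eps s k)))"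
proof -
  have b: "-1 \<le> jprime eps s k" "jprime eps s k < int k" using jp_bounds by blast+
  have mp: "(if jprime eps s k < 0 then [:eps:] else fst (hist eps s k ! nat (jprime eps s k)))
        = muI eps s (jprime eps s k)"
    using b hist_stable[of "nat (jprime eps s k)" k eps s]
    by (simp add: muI_def mu_def)
  have dp: "snd (snd (hist eps s k ! nat (jprime eps s k + 1))) = Delta eps s (nat (jprime eps s k + 1))"
    using b hist_stable[of "nat (jprime eps s k + 1)" k eps s]
    by (simp add: Delta_def)
  show "Delta eps s (Suc k) = DeltaF (mu eps s k) (Suc k) s"
    unfolding Delta_def mu_def hist_last Let_def by simp
  show "jprime eps s (Suc k) = (if Delta eps s (Suc k) = 0 \<or> e_idx eps s k \<le> 0
          then jprime eps s k else int k)"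
    unfolding Delta_def jprime_def mu_def e_idx_def hist_last Let_def by simp
  show "mu eps s (Suc k) = (if Delta eps s (Suc k) = 0 then mu eps s k else
         smult (Delta eps s (nat (jprime eps s k + 1))) (monom 1 (nat (max (e_idx eps s k) 0)) * mu eps s k)
       - smult (Delta eps s (Suc k)) (monom 1 (nat (max (- e_idx eps s k) 0)) * muI eps s (jprime eps s k)))"
    using mp dp unfolding Delta_def jprime_def mu_def e_idx_def hist_last Let_def by simp
qed

lemma reflect_monom_mult: "reflect_poly (monom (1::'a::idom) m * p) = reflect_poly p"
proof -
  have "reflect_poly (monom (1::'a) m) = 1"
    by (rule poly_eqI) (auto simp: coeff_reflect_poly coeff_monom degree_monom_eq)
  then show ?thesis by (simp add: reflect_poly_mult)
qed

lemma degree_diff_eq_left: "degree (b::'a::idom poly) < degree a \<Longrightarrow> degree (a - b) = degree a"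
  using degree_add_eq_left[of "-b" a] by simp

lemma refl_diff:
  fixes a b :: "'a::idom poly"
  assumes "degree b < degree a"
  shows "reflect_poly (a - b) = reflect_poly a - monom 1 (degree a - degree b) * reflect_poly b"
proof (rule poly_eqI)
  fix n
  have d: "degree (a - b) = degree a" using assms by (rule degree_diff_eq_left)
  show "coeff (reflect_poly (a - b)) n = coeff (reflect_poly a - monom 1 (degree a - degree b) * reflect_poly b) n"
    unfolding coeff_diff coeff_monom_mult coeff_reflect_poly d
    using assms by (auto simp: coeff_eq_0)
qed

lemma inv: "mu eps s k \<noteq> 0 \<and> Delta eps s (nat (jprime eps s k + 1)) \<noteq> 0 \<and>
   int (degree (mu eps s k)) + int (degree (muI eps s (jprime eps s k))) = jprime eps s k + 1"
proof (induction k)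
  case 0
  have "hist eps s 0 ! 0 = (1, -1, 1)" by simp
  then show ?case by (simp add: mu_def jprime_def Delta_def muI_def)
next
  case (Suc k)
  define L where "L = degree (mu eps s k)"
  define J where "J = jprime eps s k"
  define L' where "L' = degree (muI eps s J)"
  define e where "e = e_idx eps s k"
  define D' where "D' = Delta eps s (nat (J + 1))"
  define D where "D = Delta eps s (Suc k)"
  define A where "A = smult D' (monom 1 (nat (max e 0)) * mu eps s k)"
  define B where "B = smult D (monom 1 (nat (max (- e) 0)) * muI eps s J)"
  have IH: "mu eps s k \<noteq> 0" "D' \<noteq> 0" "int L + int L' = J + 1"
    using Suc by (auto simp: L_def L'_def J_def D'_def)
  have Jb: "-1 \<le> J" "J < int k" using jp_bounds J_def by auto
  have eL: "e = int k + 1 - 2 * int L" by (simp add: e_def e_idx_def L_def)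
  show ?case
  proof (cases "D = 0")
    case True
    then show ?thesis using Suc step[of eps s k] by (simp add: D_def)
  next
    case False
    have dA: "degree A = nat (max e 0) + L"
      using IH by (simp add: A_def degree_mult_eq degree_monom_eq L_def)
    have dB: "degree B \<le> nat (max (- e) 0) + L'"
      unfolding B_def L'_def
      by (rule order.trans[OF degree_smult_le]) (rule order.trans[OF degree_mult_le], simp add: degree_monom_le)
    have lt: "degree B < degree A" using dA dB IH(3) Jb eL by auto
    have mu': "mu eps s (Suc k) = A - B"
      using step(3)[of eps s k] False by (simp add: A_def B_def D_def D'_def J_def e_def)
    have dm: "degree (mu eps s (Suc k)) = degree A"
      using mu' lt by (simp add: degree_diff_eq_left)
    have nz: "mu eps s (Suc k) \<noteq> 0" using dm lt by auto
    show ?thesis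
    proof (cases "e \<le> 0")
      case True
      have "jprime eps s (Suc k) = J" using step(2)[of eps s k] True by (simp add: J_def e_def)
      then show ?thesis using nz dm dA IH True by (simp add: L_def L'_def D'_def)
    next
      case False2: False
      have "jprime eps s (Suc k) = int k" using step(2)[of eps s k] False2 False
        by (simp add: D_def e_def)
      moreover have "nat (int k + 1) = Suc k" by simp
      ultimately show ?thesis using nz dm dA IH False2 False eL
        by (simp add: L_def D_def muI_def)
    qed
  qed
qed

lemma p_idx_eq: "p_idx eps s k = nat (int k - jprime eps s k)"
proof (cases k)
  case 0
  have "hist eps s 0 ! 0 = (1, -1, 1)" by simp
  then show ?thesis using 0 by (simp add: p_idx_def jprime_def)
qed (simp add: p_idx_def)

theorem mainTheorem8:
  fixes eps :: "'a::idom" and s :: "nat \<Rightarrow> 'a" and n :: nat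
  assumes "n \<ge> 1" and "Delta eps s n \<noteq> 0"
  shows "reflect_poly (mu eps s n) =
           smult (Deltap eps s n) (reflect_poly (mu eps s (n - 1)))
         - smult (Delta eps s n)
             (monom 1 (p_idx eps s (n - 1)) * reflect_poly (muI eps s (jprime eps s (n - 1))))
         \<and> p_idx eps s n = (if e_idx eps s (n - 1) \<le> 0 then p_idx eps s (n - 1) + 1 else 1)"
proof -
  obtain k where n: "n = Suc k" using assms(1) by (cases n) auto
  define L where "L = degree (mu eps s k)"
  define J where "J = jprime eps s k"
  define L' where "L' = degree (muI eps s J)"
  define e where "e = e_idx eps s k"
  define D' where "D' = Delta eps s (nat (J + 1))"
  define D where "D = Delta eps s (Suc k)"
  define A where "A = smult D' (monom 1 (nat (max e 0)) * mu eps s k)"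
  define B where "B = smult D (monom 1 (nat (max (- e) 0)) * muI eps s J)"
  have IH: "mu eps s k \<noteq> 0" "D' \<noteq> 0" "int L + int L' = J + 1"
    using inv[of eps s k] by (auto simp: L_def L'_def J_def D'_def)
  have Jb: "-1 \<le> J" "J < int k" using jp_bounds J_def by auto
  have eL: "e = int k + 1 - 2 * int L" by (simp add: e_def e_idx_def L_def)
  have Dn: "D \<noteq> 0" using assms(2) n D_def by simp
  have dA: "degree A = nat (max e 0) + L"
    using IH by (simp add: A_def degree_mult_eq degree_monom_eq L_def)
  have dB: "degree B \<le> nat (max (- e) 0) + L'"
    unfolding B_def L'_def
    by (rule order.trans[OF degree_smult_le]) (rule order.trans[OF degree_mult_le], simp add: degree_monom_le)
  have lt: "degree B < degree A" using dA dB IH(3) Jb eL by auto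
  have mu': "mu eps s (Suc k) = A - B"
    using step(3)[of eps s k] Dn by (simp add: A_def B_def D_def D'_def J_def e_def)
  have rA: "reflect_poly A = smult D' (reflect_poly (mu eps s k))"
    by (simp add: A_def reflect_poly_smult reflect_monom_mult)
  have rB: "reflect_poly B = smult D (reflect_poly (muI eps s J))"
    by (simp add: B_def reflect_poly_smult reflect_monom_mult)
  have pk: "p_idx eps s k = nat (int k - J)" by (simp add: p_idx_eq J_def)
  have key: "monom 1 (degree A - degree B) * reflect_poly B
      = smult D (monom 1 (p_idx eps s k) * reflect_poly (muI eps s J))"
  proof (cases "muI eps s J = 0")
    case True then show ?thesis by (simp add: rB)
  next
    case False
    have "degree B = nat (max (- e) 0) + L'"
      using False Dn by (simp add: B_def degree_mult_eq degree_monom_eq L'_def)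
    then have "degree A - degree B = p_idx eps s k"
    proof (cases "e \<le> 0")
      case True
      then have "nat (max e 0) = 0" "nat (max (- e) 0) = nat (- e)" by auto
      then show ?thesis using dA \<open>degree B = _\<close> pk IH(3) eL Jb True by simp
    next
      case False
      then have "nat (max e 0) = nat e" "nat (max (- e) 0) = 0" by auto
      then show ?thesis using dA \<open>degree B = _\<close> pk IH(3) eL Jb False by simp
    qed
    then show ?thesis by (simp add: rB mult_smult_right)
  qed
  have part1: "reflect_poly (mu eps s n) =
           smult (Deltap eps s n) (reflect_poly (mu eps s (n - 1)))
         - smult (Delta eps s n)
             (monom 1 (p_idx eps s (n - 1)) * reflect_poly (muI eps s (jprime eps s (n - 1))))"
    unfolding n mu' refl_diff[OF lt] key rA
    by (simp add: Deltap_def D'_def D_def J_def)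
  have part2: "p_idx eps s n = (if e_idx eps s (n - 1) \<le> 0 then p_idx eps s (n - 1) + 1 else 1)"
  proof (cases "e \<le> 0")
    case True
    have "jprime eps s (Suc k) = J" using step(2)[of eps s k] True by (simp add: J_def e_def)
    then show ?thesis using True n pk Jb by (simp add: p_idx_eq e_def)
  next
    case False
    have "jprime eps s (Suc k) = int k" using step(2)[of eps s k] False Dn
      by (simp add: D_def e_def)
    then show ?thesis using False n by (simp add: p_idx_eq e_def)
  qed
  show ?thesis using part1 part2 by blast
qed

end
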